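(* Let $\epsilon>0$ and let $K(x,y)=\mathbf{1}(\|x-y\|_2\le\epsilon)$ be the $\epsilon$-neighborhood kernel. Then there exist $d,k\in\mathbb{N}$ and a finite dataset $X\subset\mathbb{R}^d$ such that $p(X)=\infty$; that is, the optimal kernel $k$-means cost of $X$ with respect to $K$ is $0$ while every interpretable decision tree with $k$ leaves on $X$ has strictly positive kernel $k$-means cost.
   Context: Kernel $k$-means cost of a partition $C_1,\dots,C_k$ of $X$ with respect to $K$: $\mathrm{cost}(C_1,\dots,C_k)=\sum_{x\in X}K(x,x)-\sum_l\frac{1}{|C_l|}\sum_{x,y\in C_l}K(x,y)$ (empty clusters contribute $0$); $\mathrm{cost}_{opt}(X)$ is its minimum over partitions into $k$ parts. An interpretable decision tree with $k$ leaves is a binary tree whose leaves partition $X$, where each internal node splits its data $X^u$ into $\{x\in X^u:x_i\in[\theta_1,\theta_2]\}$ and $\{x\in X^u:x_i\notin[\theta_1,\theta_2]\}$ for some $i\in[d]$ and reals $\theta_1<\theta_2$; $\mathrm{cost}(T,X)$ is the cost of its leaf partition. The price of explainability is $p(X)=\min_T \mathrm{cost}(T,X)/\mathrm{cost}_{opt}(X)$, with the convention that a positive number divided by $0$ is $\infty$. *)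

theory Defs
  imports Main "HOL-Analysis.Analysis"
begin

text \<open>Points of R^d are represented as functions nat => real vanishing at indices >= d.\<close>

definition Rd :: "nat \<Rightarrow> (nat \<Rightarrow> real) set" where
  "Rd d = {x. \<forall>i\<ge>d. x i = 0}"

definition eucl_dist :: "nat \<Rightarrow> (nat \<Rightarrow> real) \<Rightarrow> (nat \<Rightarrow> real) \<Rightarrow> real" where
  "eucl_dist d x y = sqrt (\<Sum>i<d. (x i - y i)^2)"

definition nbhd_kernel :: "real \<Rightarrow> nat \<Rightarrow> (nat \<Rightarrow> real) \<Rightarrow> (nat \<Rightarrow> real) \<Rightarrow> real" where
  "nbhd_kernel eps d x y = (if eucl_dist d x y \<le> eps then 1 else 0)"

definition kmeans_cost :: "('a \<Rightarrow> 'a \<Rightarrow> real) \<Rightarrow> 'a set \<Rightarrow> nat \<Rightarrow> (nat \<Rightarrow> 'a set) \<Rightarrow> real" where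
  "kmeans_cost K X k C =
     (\<Sum>x\<in>X. K x x) -
     (\<Sum>l<k. if C l = {} then 0 else (1 / real (card (C l))) * (\<Sum>x\<in>C l. \<Sum>y\<in>C l. K x y))"

definition is_partition :: "'a set \<Rightarrow> nat \<Rightarrow> (nat \<Rightarrow> 'a set) \<Rightarrow> bool" where
  "is_partition X k C \<longleftrightarrow>
     (\<Union>l<k. C l) = X \<and> (\<forall>l<k. \<forall>m<k. l \<noteq> m \<longrightarrow> C l \<inter> C m = {})"

definition cost_opt :: "('a \<Rightarrow> 'a \<Rightarrow> real) \<Rightarrow> 'a set \<Rightarrow> nat \<Rightarrow> real" where
  "cost_opt K X k = Inf {kmeans_cost K X k C | C. is_partition X k C}"

text \<open>Interpretable decision trees: a node (Node i t1 t2 L R) sends the points x with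
  x i in [t1,t2] to the subtree L and the remaining points to R.\<close>
datatype dtree = Leaf | Node nat real real dtree dtree

fun num_leaves :: "dtree \<Rightarrow> nat" where
  "num_leaves Leaf = 1"
| "num_leaves (Node i t1 t2 L R) = num_leaves L + num_leaves R"

fun valid_tree :: "nat \<Rightarrow> dtree \<Rightarrow> bool" where
  "valid_tree d Leaf = True"
| "valid_tree d (Node i t1 t2 L R) = (i < d \<and> t1 < t2 \<and> valid_tree d L \<and> valid_tree d R)"

fun leaf_sets :: "dtree \<Rightarrow> (nat \<Rightarrow> real) set \<Rightarrow> (nat \<Rightarrow> real) set list" where
  "leaf_sets Leaf S = [S]"
| "leaf_sets (Node i t1 t2 L R) S =
     leaf_sets L {x\<in>S. t1 \<le> x i \<and> x i \<le> t2} @ leaf_sets R {x\<in>S. \<not> (t1 \<le> x i \<and> x i \<le> t2)}"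

definition tree_cost :: "((nat \<Rightarrow> real) \<Rightarrow> (nat \<Rightarrow> real) \<Rightarrow> real) \<Rightarrow> dtree \<Rightarrow> (nat \<Rightarrow> real) set \<Rightarrow> real" where
  "tree_cost K T X = kmeans_cost K X (num_leaves T) (\<lambda>l. leaf_sets T X ! l)"

end

theory Submission
  imports Defs
begin

definition pt :: "real \<Rightarrow> real \<Rightarrow> real \<Rightarrow> nat \<Rightarrow> real" where
  "pt e a b = (\<lambda>i. if i = 0 then 2*e/5*a else if i = 1 then 2*e/5*b else 0)"

lemma pt_eq_iff:
  assumes "e > 0" shows "pt e a b = pt e a' b' \<longleftrightarrow> a = a' \<and> b = b'"
proof
  assume h: "pt e a b = pt e a' b'"
  have "pt e a b 0 = pt e a' b' 0" "pt e a b 1 = pt e a' b' 1" using h by auto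
  then show "a = a' \<and> b = b'" using assms by (simp add: pt_def)
qed simp

lemma pt_Rd: "pt e a b \<in> Rd 2"
  by (simp add: pt_def Rd_def)

lemma kern_pt:
  assumes "e > 0"
  shows "nbhd_kernel e 2 (pt e a b) (pt e a' b') =
         (if 4*((a-a')^2+(b-b')^2) \<le> 25 then 1 else 0)"
proof -
  have d: "eucl_dist 2 (pt e a b) (pt e a' b') = sqrt ((2*e/5)^2 * ((a-a')^2+(b-b')^2))"
    by (simp add: eucl_dist_def pt_def numeral_2_eq_2 power2_eq_square algebra_simps)
  have "(sqrt ((2*e/5)^2 * ((a-a')^2+(b-b')^2)) \<le> e) \<longleftrightarrow>
        ((2*e/5)^2 * ((a-a')^2+(b-b')^2) \<le> e^2)"
    using assms by (metis less_imp_le real_sqrt_le_iff real_sqrt_abs abs_of_pos)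
  also have "\<dots> \<longleftrightarrow> e^2 * (4*((a-a')^2+(b-b')^2)) \<le> e^2 * 25"
    by (simp add: power2_eq_square field_simps)
  also have "\<dots> \<longleftrightarrow> 4*((a-a')^2+(b-b')^2) \<le> 25"
    using assms by simp
  finally show ?thesis by (simp add: nbhd_kernel_def d)
qed

lemma part_term_le:
  assumes "finite S" "\<And>x y. K x y = 0 \<or> K x y = 1"
  shows "(if S = {} then 0 else (1 / real (card S)) * (\<Sum>x\<in>S. \<Sum>y\<in>S. K x y)) \<le> real (card S)"
proof (cases "S = {}")
  case False
  have "(\<Sum>x\<in>S. \<Sum>y\<in>S. K x y) \<le> (\<Sum>x\<in>S. \<Sum>y\<in>S. 1)"
    by (intro sum_mono) (metis assms(2) order_refl zero_le_one)
  also have "\<dots> = real (card S) * real (card S)" by simp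
  finally have "(\<Sum>x\<in>S. \<Sum>y\<in>S. K x y) \<le> real (card S) * real (card S)" .
  moreover have "card S > 0" using False assms(1) by (simp add: card_gt_0_iff)
  ultimately show ?thesis using False by (simp add: field_simps)
qed simp

lemma part_term_lt:
  assumes "finite S" "\<And>x y. K x y = 0 \<or> K x y = 1" "a \<in> S" "b \<in> S" "K a b = 0"
  shows "(if S = {} then 0 else (1 / real (card S)) * (\<Sum>x\<in>S. \<Sum>y\<in>S. K x y)) < real (card S)"
proof -
  have ne: "S \<noteq> {}" using assms by auto
  have le: "\<And>x y. K x y \<le> 1" by (metis assms(2) order_refl zero_le_one)
  have "(\<Sum>x\<in>S. \<Sum>y\<in>S. K x y) < (\<Sum>x\<in>S. \<Sum>y\<in>S. 1)"
  proof (rule sum_strict_mono_ex1[OF assms(1)])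
    show "\<forall>x\<in>S. (\<Sum>y\<in>S. K x y) \<le> (\<Sum>y\<in>S. 1)" by (intro ballI sum_mono le)
    have "(\<Sum>y\<in>S. K a y) < (\<Sum>y\<in>S. 1)"
      by (rule sum_strict_mono_ex1[OF assms(1)]) (use le assms(4,5) in force)+
    then show "\<exists>x\<in>S. (\<Sum>y\<in>S. K x y) < (\<Sum>y\<in>S. 1)" using assms(3) by blast
  qed
  also have "\<dots> = real (card S) * real (card S)" by simp
  finally have "(\<Sum>x\<in>S. \<Sum>y\<in>S. K x y) < real (card S) * real (card S)" .
  moreover have "card S > 0" using ne assms(1) by (simp add: card_gt_0_iff)
  ultimately show ?thesis using ne by (simp add: field_simps)
qed

lemma cost_as_sum:
  assumes "finite X" "is_partition X k C" "\<And>x. K x x = 1"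
  shows "kmeans_cost K X k C = (\<Sum>l<k. real (card (C l)) -
     (if C l = {} then 0 else (1 / real (card (C l))) * (\<Sum>x\<in>C l. \<Sum>y\<in>C l. K x y)))"
proof -
  have U: "(\<Union>l<k. C l) = X" and D: "\<forall>l<k. \<forall>m<k. l \<noteq> m \<longrightarrow> C l \<inter> C m = {}"
    using assms(2) by (auto simp: is_partition_def)
  have fin: "\<forall>l\<in>{..<k}. finite (C l)" using U assms(1) by (metis UN_upper finite_subset)
  have "(\<Sum>x\<in>X. K x x) = real (card X)" using assms(3) by simp
  also have "card X = (\<Sum>l<k. card (C l))"
    using card_UN_disjoint[of "{..<k}" C] fin D U by auto
  finally have "(\<Sum>x\<in>X. K x x) = (\<Sum>l<k. real (card (C l)))" by simp
  then show ?thesis by (simp add: kmeans_cost_def sum_subtractf)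
qed

lemma cost_nonneg:
  assumes "finite X" "is_partition X k C" "\<And>x. K x x = 1" "\<And>x y. K x y = 0 \<or> K x y = 1"
  shows "kmeans_cost K X k C \<ge> 0"
proof -
  have U: "(\<Union>l<k. C l) = X" using assms(2) by (auto simp: is_partition_def)
  have fin: "\<And>l. l < k \<Longrightarrow> finite (C l)" using U assms(1) by (metis UN_upper finite_subset lessThan_iff)
  show ?thesis unfolding cost_as_sum[OF assms(1-3)]
    by (intro sum_nonneg) (use part_term_le[OF fin assms(4)] in auto)
qed

lemma cost_pos:
  assumes "finite X" "is_partition X k C" "\<And>x. K x x = 1" "\<And>x y. K x y = 0 \<or> K x y = 1"
    and "l < k" "a \<in> C l" "b \<in> C l" "K a b = 0"
  shows "kmeans_cost K X k C > 0"
proof -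
  have U: "(\<Union>l<k. C l) = X" using assms(2) by (auto simp: is_partition_def)
  have fin: "\<And>l. l < k \<Longrightarrow> finite (C l)" using U assms(1) by (metis UN_upper finite_subset lessThan_iff)
  have "(\<Sum>l<k. (0::real)) < (\<Sum>l<k. real (card (C l)) -
     (if C l = {} then 0 else (1 / real (card (C l))) * (\<Sum>x\<in>C l. \<Sum>y\<in>C l. K x y)))"
  proof (rule sum_strict_mono_ex1)
    show "\<forall>x\<in>{..<k}. 0 \<le> real (card (C x)) -
     (if C x = {} then 0 else (1 / real (card (C x))) * (\<Sum>xa\<in>C x. \<Sum>y\<in>C x. K xa y))"
      using part_term_le[OF fin assms(4)] by auto
    show "\<exists>x\<in>{..<k}. 0 < real (card (C x)) -
     (if C x = {} then 0 else (1 / real (card (C x))) * (\<Sum>xa\<in>C x. \<Sum>y\<in>C x. K xa y))"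
      using part_term_lt[of "C l" K a b, OF fin[OF assms(5)] assms(4) assms(6-8)] assms(5,6) by (intro bexI[of _ l]) (auto split: if_splits)
  qed simp
  then show ?thesis unfolding cost_as_sum[OF assms(1-3)] by simp
qed

lemma num_leaves_pos: "num_leaves T \<ge> 1"
  by (induction T) auto

lemma num_leaves_1: "num_leaves T = 1 \<Longrightarrow> T = Leaf"
proof (cases T)
  case (Node i a b L R)
  assume "num_leaves T = 1"
  then have False using Node num_leaves_pos[of L] num_leaves_pos[of R] by simp
  then show ?thesis ..
qed simp

lemma lt2: "{..<2::nat} = {0,1}" by auto

theorem proposition2:
  fixes eps :: real
  assumes "eps > 0"
  shows "\<exists>(d::nat) (k::nat) (X::(nat \<Rightarrow> real) set).
           1 \<le> k \<and> finite X \<and> X \<subseteq> Rd d \<and>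
           cost_opt (nbhd_kernel eps d) X k = 0 \<and>
           (\<forall>T. valid_tree d T \<and> num_leaves T = k \<longrightarrow> tree_cost (nbhd_kernel eps d) T X > 0)"
proof -
  define p1 where "p1 = pt eps 2 3"
  define p2 where "p2 = pt eps 0 2"
  define p3 where "p3 = pt eps 2 0"
  define p4 where "p4 = pt eps 3 2"
  define X where "X = {p1, p2, p3, p4}"
  define K where "K = nbhd_kernel eps 2"
  note kp = kern_pt[OF assms]
  note pe = pt_eq_iff[OF assms]
  have Kdiag: "\<And>x. K x x = 1" by (simp add: K_def nbhd_kernel_def eucl_dist_def assms less_imp_le)
  have K01: "\<And>x y. K x y = 0 \<or> K x y = 1" by (simp add: K_def nbhd_kernel_def)
  have finX: "finite X" by (simp add: X_def)
  have XRd: "X \<subseteq> Rd 2" by (simp add: X_def p1_def p2_def p3_def p4_def pt_Rd)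
  have K13: "K p1 p3 = 0" by (simp add: K_def p1_def p3_def kp)
  have K24: "K p2 p4 = 0" by (simp add: K_def p2_def p4_def kp)
  have opt: "cost_opt K X 2 = 0"
  proof -
    define C where "C = (\<lambda>l::nat. if l = 0 then {p1, p2} else {p3, p4})"
    have part: "is_partition X 2 C"
      unfolding is_partition_def C_def X_def
      by (auto simp: lessThan_Suc numeral_2_eq_2 p1_def p2_def p3_def p4_def pe)
    have "kmeans_cost K X 2 C = 0"
      unfolding cost_as_sum[OF finX part Kdiag]
      by (simp add: lt2 C_def p1_def p2_def p3_def p4_def pe K_def kp)
    then show ?thesis unfolding cost_opt_def
      using part cost_nonneg[of X 2 _ K, OF finX _ Kdiag K01]
      by (intro cInf_eq_minimum) auto
  qed
  have trees: "tree_cost K T X > 0" if T: "valid_tree 2 T" "num_leaves T = 2" for T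
  proof (cases T)
    case Leaf then show ?thesis using T by simp
  next
    case (Node i t1 t2 L R)
    have "num_leaves L = 1" "num_leaves R = 1"
      using T Node num_leaves_pos[of L] num_leaves_pos[of R] by auto
    then have LR: "L = Leaf" "R = Leaf" using num_leaves_1 by auto
    have i: "i = 0 \<or> i = 1" using T Node by auto
    define S where "S = {x\<in>X. t1 \<le> x i \<and> x i \<le> t2}"
    define S' where "S' = {x\<in>X. \<not> (t1 \<le> x i \<and> x i \<le> t2)}"
    define C where "C = (\<lambda>l. [S, S'] ! l)"
    have tc: "tree_cost K T X = kmeans_cost K X 2 C"
      by (simp add: tree_cost_def Node LR C_def S_def S'_def numeral_2_eq_2)
    have C0: "C 0 = S" and C1: "C (Suc 0) = S'" by (simp_all add: C_def)
    have part: "is_partition X 2 C"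
      unfolding is_partition_def lt2 by (auto simp: C0 C1 S_def S'_def less_2_cases_iff)
    have "\<exists>l<2. \<exists>a\<in>C l. \<exists>b\<in>C l. K a b = 0"
      using i
    proof
      assume "i = 0"
      then have "p1 i = p3 i" by (simp add: p1_def p3_def pt_def)
      then have "(p1 \<in> S \<and> p3 \<in> S) \<or> (p1 \<in> S' \<and> p3 \<in> S')"
        by (auto simp: S_def S'_def X_def)
      then show ?thesis
      proof
        assume "p1 \<in> S \<and> p3 \<in> S"
        then show ?thesis using K13 C0 by (intro exI[of _ 0]) auto
      next
        assume "p1 \<in> S' \<and> p3 \<in> S'"
        then show ?thesis using K13 C1 by (intro exI[of _ 1]) auto
      qed
    next
      assume "i = 1"
      then have "p2 i = p4 i" by (simp add: p2_def p4_def pt_def)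
      then have "(p2 \<in> S \<and> p4 \<in> S) \<or> (p2 \<in> S' \<and> p4 \<in> S')"
        by (auto simp: S_def S'_def X_def)
      then show ?thesis
      proof
        assume "p2 \<in> S \<and> p4 \<in> S"
        then show ?thesis using K24 C0 by (intro exI[of _ 0]) auto
      next
        assume "p2 \<in> S' \<and> p4 \<in> S'"
        then show ?thesis using K24 C1 by (intro exI[of _ 1]) auto
      qed
    qed
    then obtain l a b where "l < 2" "a \<in> C l" "b \<in> C l" "K a b = 0" by blast
    then show ?thesis unfolding tc using cost_pos[of X 2 C K, OF finX part Kdiag K01] by blast
  qed
  show ?thesis
    by (rule exI[of _ 2], rule exI[of _ 2], rule exI[of _ X])
       (use finX XRd opt trees in \<open>simp add: K_def\<close>)
qed

end
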